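(* Let $b\in\mathbb{Z}^+$. Then $t(3,5,4b;4n+3)=t(3,5,b;n)$ for every $n\in\mathbb{Z}^+$, and for all complex $q$ with $|q|<1$, $$\sum_{n=0}^{\infty}t(3,5,4b;4n+5)q^n=8\psi(q^b)\big(\varphi(q^{10})\psi(q^{12})+q\varphi(q^6)\psi(q^{20})\big).$$
   Context: $\mathbb{Z}^+$ is the set of positive integers. For $a,b,c\in\mathbb{Z}^+$ and nonnegative integer $n$, $t(a,b,c;n)$ denotes the number of triples $(x,y,z)\in\mathbb{Z}^3$ with $n=a\frac{x(x+1)}2+b\frac{y(y+1)}2+c\frac{z(z+1)}2$. Ramanujan's theta functions are $\varphi(q)=\sum_{n=-\infty}^{\infty}q^{n^2}$ and $\psi(q)=\sum_{n=0}^{\infty}q^{n(n+1)/2}$ for $|q|<1$. *)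

theory Defs
  imports "HOL-Analysis.Analysis"
begin

definition tcount :: "nat \<Rightarrow> nat \<Rightarrow> nat \<Rightarrow> nat \<Rightarrow> nat" where
  "tcount a b c n = card {(x :: int, y :: int, z :: int).
     int n = int a * (x * (x + 1) div 2) + int b * (y * (y + 1) div 2) + int c * (z * (z + 1) div 2)}"

definition ram_phi :: "complex \<Rightarrow> complex" where
  "ram_phi q = (\<Sum>\<^sub>\<infinity>n::int. q ^ nat (n * n))"

definition ram_psi :: "complex \<Rightarrow> complex" where
  "ram_psi q = (\<Sum>n. q ^ (n * (n + 1) div 2))"

end

theory Submission
  imports Defs
begin

definition tri :: "int \<Rightarrow> int" where "tri x = x * (x + 1) div 2"

lemma tcount_tri: "tcount a b c n = card {(x, y, z). int n = int a * tri x + int b * tri y + int c * tri z}"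
  unfolding tcount_def tri_def ..

lemma tri2: "2 * tri x = x * (x + 1)"
  unfolding tri_def by simp

lemma tri_nonneg: "tri x \<ge> 0"
proof -
  have "x * (x + 1) \<ge> 0"
    by (cases "x \<ge> 0") (auto simp: mult_nonneg_nonneg mult_nonpos_nonpos)
  then show ?thesis using tri2[of x] by linarith
qed

lemma tri_neg: "tri (- x - 1) = tri x"
  unfolding tri_def by (simp add: algebra_simps)

lemma tri_mod8: "tri x mod 4 = tri (x mod 8) mod 4"
proof -
  obtain k r where x: "x = 8 * k + r" and r: "r = x mod 8" by (metis mult_div_mod_eq)
  have "2 * tri x = 2 * (tri r + 4 * (k * (8 * k + 2 * r + 1)))"
    using tri2[of x] tri2[of r] x by (simp add: algebra_simps)
  then have "tri x = tri r + 4 * (k * (8 * k + 2 * r + 1))" by simp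
  then show ?thesis using r by simp
qed

lemma key1:
  assumes "(3 * tri x + 5 * tri y) mod 4 = 3"
  shows "(x + 5 * y) mod 8 = 1 \<or> (x - 5 * y) mod 8 = 6"
proof -
  define r where "r = x mod 8"
  define s where "s = y mod 8"
  have h: "(3 * tri r + 5 * tri s) mod 4 = 3"
    using assms tri_mod8[of x] tri_mod8[of y] unfolding r_def s_def by (metis mod_add_cong mod_mult_right_eq)
  have e1: "(x + 5 * y) mod 8 = (r + 5 * s) mod 8" unfolding r_def s_def by (metis mod_add_cong mod_mult_right_eq mod_mod_trivial)
  have e2: "(x - 5 * y) mod 8 = (r - 5 * s) mod 8" unfolding r_def s_def by (metis mod_diff_cong mod_mult_right_eq mod_mod_trivial)
  have "r \<in> {0..7}" "s \<in> {0..7}" unfolding r_def s_def by auto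
  then have "r \<in> {0,1,2,3,4,5,6,7}" "s \<in> {0,1,2,3,4,5,6,7}" by auto
  then have "(r + 5 * s) mod 8 = 1 \<or> (r - 5 * s) mod 8 = 6"
    using h by (auto simp: tri_def)
  then show ?thesis using e1 e2 by simp
qed

lemma key2:
  assumes "(3 * tri x + 5 * tri y) mod 4 = 1"
  shows "(x + 5 * y) mod 8 = 5 \<or> (x - 5 * y) mod 8 = 2"
proof -
  define r where "r = x mod 8"
  define s where "s = y mod 8"
  have h: "(3 * tri r + 5 * tri s) mod 4 = 1"
    using assms tri_mod8[of x] tri_mod8[of y] unfolding r_def s_def by (metis mod_add_cong mod_mult_right_eq)
  have e1: "(x + 5 * y) mod 8 = (r + 5 * s) mod 8" unfolding r_def s_def by (metis mod_add_cong mod_mult_right_eq mod_mod_trivial)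
  have e2: "(x - 5 * y) mod 8 = (r - 5 * s) mod 8" unfolding r_def s_def by (metis mod_diff_cong mod_mult_right_eq mod_mod_trivial)
  have "r \<in> {0..7}" "s \<in> {0..7}" unfolding r_def s_def by auto
  then have "r \<in> {0,1,2,3,4,5,6,7}" "s \<in> {0,1,2,3,4,5,6,7}" by auto
  then have "(r + 5 * s) mod 8 = 5 \<or> (r - 5 * s) mod 8 = 2"
    using h by (auto simp: tri_def)
  then show ?thesis using e1 e2 by simp
qed

definition F1 :: "int \<times> int \<Rightarrow> int \<times> int" where
  "F1 p = (case p of (x, y) \<Rightarrow> if even (x + y) then ((x + 5 * y + 2) div 2, (3 * x - y) div 2)
     else ((x - 5 * y - 3) div 2, - ((3 * x + y + 3) div 2)))"

definition G1 :: "int \<times> int \<Rightarrow> int \<times> int" where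
  "G1 p = (case p of (x, y) \<Rightarrow> if (x + 5 * y) mod 8 = 1 then ((x + 5 * y - 1) div 8, (3 * x - y - 3) div 8)
     else ((x - 5 * y - 6) div 8, - ((3 * x + y + 6) div 8)))"

definition Q :: "int \<times> int \<Rightarrow> int" where
  "Q p = (case p of (x, y) \<Rightarrow> 3 * tri x + 5 * tri y)"

lemma div_exact: "(m::int) = d * t \<Longrightarrow> d \<noteq> 0 \<Longrightarrow> m div d = t"
  by simp

lemma even_mod8: "even (m::int) \<Longrightarrow> m mod 8 \<noteq> 1"
  by presburger

lemma Q_lin:
  assumes "2 * a = X" "2 * c = Y"
  shows "8 * (3 * tri a + 5 * tri c) = 3 * (X * (X + 2)) + 5 * (Y * (Y + 2))"
proof -
  have "8 * (3 * tri a + 5 * tri c) = 3 * ((2*a) * (2*a+2)) + 5 * ((2*c)*(2*c+2))"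
    using tri2[of a] tri2[of c] by (simp add: algebra_simps)
  then show ?thesis using assms by simp
qed

lemma F1_even:
  assumes "x + y = 2 * k"
  shows "F1 (x, y) = (k + 2 * y + 1, 3 * k - 2 * y)"
proof -
  have ev: "even (x + y)" using assms by simp
  have e1: "x + 5 * y + 2 = 2 * (k + 2 * y + 1)" using assms by algebra
  have e2: "3 * x - y = 2 * (3 * k - 2 * y)" using assms by algebra
  have "F1 (x, y) = ((x + 5 * y + 2) div 2, (3 * x - y) div 2)"
    unfolding F1_def prod.case using ev by (simp only: if_True)
  also have "\<dots> = (k + 2 * y + 1, 3 * k - 2 * y)" unfolding e1 e2 by simp
  finally show ?thesis .
qed

lemma F1_odd:
  assumes "x + y = 2 * k + 1"
  shows "F1 (x, y) = (k - 3 * y - 1, - (3 * k - y + 3))"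
proof -
  have od: "\<not> even (x + y)" using assms by simp
  have e1: "x - 5 * y - 3 = 2 * (k - 3 * y - 1)" using assms by algebra
  have e2: "3 * x + y + 3 = 2 * (3 * k - y + 3)" using assms by algebra
  have "F1 (x, y) = ((x - 5 * y - 3) div 2, - ((3 * x + y + 3) div 2))"
    unfolding F1_def prod.case using od by (simp only: if_False)
  also have "\<dots> = (k - 3 * y - 1, - (3 * k - y + 3))" unfolding e1 e2 by simp
  finally show ?thesis .
qed

lemma G1_1:
  assumes "x + 5 * y = 8 * k + 1"
  shows "G1 (x, y) = (k, 3 * k - 2 * y)"
proof -
  have c: "(x + 5 * y) mod 8 = 1" using assms by simp
  have e1: "x + 5 * y - 1 = 8 * k" using assms by algebra
  have e2: "3 * x - y - 3 = 8 * (3 * k - 2 * y)" using assms by algebra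
  have "G1 (x, y) = ((x + 5 * y - 1) div 8, (3 * x - y - 3) div 8)"
    unfolding G1_def prod.case using c by simp
  also have "\<dots> = (k, 3 * k - 2 * y)" unfolding e1 e2 by simp
  finally show ?thesis .
qed

lemma G1_2:
  assumes "x - 5 * y = 8 * k + 6"
  shows "G1 (x, y) = (k, - (3 * k + 2 * y + 3))"
proof -
  have "x + 5 * y = 2 * (4 * k + 3 + 5 * y)" using assms by algebra
  then have c: "\<not> (x + 5 * y) mod 8 = 1" by (intro even_mod8) simp
  have e1: "x - 5 * y - 6 = 8 * k" using assms by algebra
  have e2: "3 * x + y + 6 = 8 * (3 * k + 2 * y + 3)" using assms by algebra
  have "G1 (x, y) = ((x - 5 * y - 6) div 8, - ((3 * x + y + 6) div 8))"
    unfolding G1_def prod.case using c by (simp only: if_False)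
  also have "\<dots> = (k, - (3 * k + 2 * y + 3))" unfolding e1 e2 by simp
  finally show ?thesis .
qed

lemma my_pair_eqI: "a = x \<Longrightarrow> b = y \<Longrightarrow> (a, b) = (x, y)" by simp

lemma G1_F1: "G1 (F1 p) = p"
proof (cases p)
  case (Pair x y)
  show ?thesis
  proof (cases "even (x + y)")
    case True
    then obtain k where k: "x + y = 2 * k" by blast
    have "G1 (F1 (x, y)) = G1 (k + 2 * y + 1, 3 * k - 2 * y)" using F1_even[OF k] by simp
    also have "\<dots> = (2 * k - y, 3 * (2 * k - y) - 2 * (3 * k - 2 * y))"
      by (rule G1_1) algebra
    also have "\<dots> = (x, y)" by (insert k, rule my_pair_eqI; (simp add: algebra_simps)?; linarith)
    finally show ?thesis using Pair by simp
  next
    case False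
    then obtain k where k: "x + y = 2 * k + 1" by (metis oddE)
    have "G1 (F1 (x, y)) = G1 (k - 3 * y - 1, - (3 * k - y + 3))" using F1_odd[OF k] by simp
    also have "\<dots> = (2 * k - y + 1, - (3 * (2 * k - y + 1) + 2 * (- (3 * k - y + 3)) + 3))"
      by (rule G1_2) algebra
    also have "\<dots> = (x, y)" by (insert k, rule my_pair_eqI; (simp add: algebra_simps)?; linarith)
    finally show ?thesis using Pair by simp
  qed
qed

lemma F1_G1:
  assumes "Q p mod 4 = 3"
  shows "F1 (G1 p) = p"
proof (cases p)
  case (Pair x y)
  have key: "(x + 5 * y) mod 8 = 1 \<or> (x - 5 * y) mod 8 = 6"
    using key1[of x y] assms Pair by (simp add: Q_def)
  show ?thesis
  proof (cases "(x + 5 * y) mod 8 = 1")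
    case True
    then obtain k where k: "x + 5 * y = 8 * k + 1" by (metis mult_div_mod_eq add.commute mult.commute)
    have "F1 (G1 (x, y)) = F1 (k, 3 * k - 2 * y)" using G1_1[OF k] by simp
    also have "\<dots> = ((2 * k - y) + 2 * (3 * k - 2 * y) + 1, 3 * (2 * k - y) - 2 * (3 * k - 2 * y))"
      by (rule F1_even) algebra
    also have "\<dots> = (x, y)" by (insert k, rule my_pair_eqI; (simp add: algebra_simps)?; linarith)
    finally show ?thesis using Pair by simp
  next
    case False
    then have F6: "(x - 5 * y) mod 8 = 6" using key by simp
    then obtain k where k: "x - 5 * y = 8 * k + 6" by (metis mult_div_mod_eq add.commute mult.commute)
    have "F1 (G1 (x, y)) = F1 (k, - (3 * k + 2 * y + 3))" using G1_2[OF k] by simp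
    also have "\<dots> = ((- k - y - 2) - 3 * (- (3 * k + 2 * y + 3)) - 1, - (3 * (- k - y - 2) - (- (3 * k + 2 * y + 3)) + 3))"
      by (rule F1_odd) algebra
    also have "\<dots> = (x, y)" by (insert k, rule my_pair_eqI; (simp add: algebra_simps)?; linarith)
    finally show ?thesis using Pair by simp
  qed
qed

lemma F1_Q: "Q (F1 p) = 4 * Q p + 3"
proof (cases p)
  case (Pair x y)
  have tx: "2 * tri x = x * (x + 1)" and ty: "2 * tri y = y * (y + 1)" by (rule tri2)+
  show ?thesis
  proof (cases "even (x + y)")
    case True
    then obtain k where k: "x + y = 2 * k" by blast
    define a where "a = k + 2 * y + 1"
    define c where "c = 3 * k - 2 * y"
    have ha: "2 * a = x + 5 * y + 2" unfolding a_def using k by algebra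
    have hc: "2 * c = 3 * x - y" unfolding c_def using k by algebra
    have "8 * (3 * tri a + 5 * tri c) = 3 * ((x + 5 * y + 2) * (x + 5 * y + 2 + 2)) + 5 * ((3 * x - y) * (3 * x - y + 2))"
      by (rule Q_lin[OF ha hc])
    also have "\<dots> = 8 * (4 * (3 * tri x + 5 * tri y) + 3)"
      using tx ty by (simp add: algebra_simps)
    finally have "3 * tri a + 5 * tri c = 4 * (3 * tri x + 5 * tri y) + 3" by simp
    then show ?thesis using F1_even[OF k] Pair by (simp add: Q_def a_def c_def)
  next
    case False
    then obtain k where k: "x + y = 2 * k + 1" by (metis oddE)
    define a where "a = k - 3 * y - 1"
    define c where "c = - (3 * k - y + 3)"
    have ha: "2 * a = x - 5 * y - 3" unfolding a_def using k by algebra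
    have hc: "2 * c = - (3 * x + y + 3)" unfolding c_def using k by algebra
    have "8 * (3 * tri a + 5 * tri c) = 3 * ((x - 5 * y - 3) * (x - 5 * y - 3 + 2)) + 5 * ((- (3 * x + y + 3)) * (- (3 * x + y + 3) + 2))"
      by (rule Q_lin[OF ha hc])
    also have "\<dots> = 8 * (4 * (3 * tri x + 5 * tri y) + 3)"
      using tx ty by (simp add: algebra_simps)
    finally have "3 * tri a + 5 * tri c = 4 * (3 * tri x + 5 * tri y) + 3" by simp
    then show ?thesis using F1_odd[OF k] Pair by (simp add: Q_def a_def c_def)
  qed
qed

definition H1 :: "int \<times> int \<times> int \<Rightarrow> int \<times> int \<times> int" where
  "H1 p = (case p of (x, y, z) \<Rightarrow> (fst (F1 (x, y)), snd (F1 (x, y)), z))"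
definition H2 :: "int \<times> int \<times> int \<Rightarrow> int \<times> int \<times> int" where
  "H2 p = (case p of (x, y, z) \<Rightarrow> (fst (G1 (x, y)), snd (G1 (x, y)), z))"

lemma Q_pair: "Q (x, y) = 3 * tri x + 5 * tri y" by (simp add: Q_def)

lemma part1: "tcount 3 5 (4 * b) (4 * n + 3) = tcount 3 5 b n"
proof -
  define S where "S = {(x, y, z). int n = int 3 * tri x + int 5 * tri y + int b * tri z}"
  define T where "T = {(x, y, z). int (4 * n + 3) = int 3 * tri x + int 5 * tri y + int (4 * b) * tri z}"
  have bij: "bij_betw H1 S T"
  proof (rule bij_betw_byWitness[where f' = H2])
    show "\<forall>a\<in>S. H2 (H1 a) = a"
    proof
      fix p assume "p \<in> S"
      obtain x y z where p: "p = (x, y, z)" by (cases p) auto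
      have "G1 (F1 (x, y)) = (x, y)" by (rule G1_F1)
      then show "H2 (H1 p) = p" by (simp add: p H1_def H2_def)
    qed
    show "\<forall>a\<in>T. H1 (H2 a) = a"
    proof
      fix p assume "p \<in> T"
      obtain x y z where p: "p = (x, y, z)" by (cases p) auto
      have "int (4 * n + 3) = Q (x, y) + 4 * (int b * tri z)" using \<open>p \<in> T\<close> by (simp add: T_def p Q_def)
      then have "Q (x, y) mod 4 = 3" by presburger
      then have "F1 (G1 (x, y)) = (x, y)" by (rule F1_G1)
      then show "H1 (H2 p) = p" by (simp add: p H1_def H2_def)
    qed
    show "H1 ` S \<subseteq> T"
    proof
      fix p assume "p \<in> H1 ` S"
      then obtain x y z where p: "p = H1 (x, y, z)" and "(x, y, z) \<in> S" by auto
      then have e: "int n = Q (x, y) + int b * tri z" by (simp add: S_def Q_def)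
      have "Q (F1 (x, y)) = 4 * Q (x, y) + 3" by (rule F1_Q)
      then have "int (4 * n + 3) = Q (F1 (x, y)) + int (4 * b) * tri z" using e by simp
      then show "p \<in> T" by (simp add: T_def p H1_def Q_def split: prod.splits)
    qed
    show "H2 ` T \<subseteq> S"
    proof
      fix p assume "p \<in> H2 ` T"
      then obtain x y z where p: "p = H2 (x, y, z)" and "(x, y, z) \<in> T" by auto
      then have e: "int (4 * n + 3) = Q (x, y) + 4 * (int b * tri z)" by (simp add: T_def Q_def)
      then have "Q (x, y) mod 4 = 3" by presburger
      then have "F1 (G1 (x, y)) = (x, y)" by (rule F1_G1)
      then have "Q (x, y) = 4 * Q (G1 (x, y)) + 3" by (metis F1_Q)
      then have "int n = Q (G1 (x, y)) + int b * tri z" using e by simp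
      then show "p \<in> S" by (simp add: S_def p H2_def Q_def split: prod.splits)
    qed
  qed
  have "tcount 3 5 (4 * b) (4 * n + 3) = card T" unfolding tcount_tri T_def ..
  also have "\<dots> = card S" using bij_betw_same_card[OF bij] by simp
  also have "\<dots> = tcount 3 5 b n" unfolding tcount_tri S_def ..
  finally show ?thesis .
qed

lemma norm_pow_mono:
  fixes q :: complex
  assumes "norm q < 1" "m \<le> k"
  shows "norm (q ^ k) \<le> norm (q ^ m)"
  unfolding norm_power by (rule power_decreasing) (use assms in auto)

lemma summable_geom_sub:
  fixes q :: complex
  assumes "norm q < 1" "\<And>n. n \<le> f n"
  shows "summable (\<lambda>n. norm (q ^ f n))"
proof (rule summable_comparison_test[where g = "\<lambda>n. norm q ^ n"])
  show "\<exists>N. \<forall>n\<ge>N. norm (norm (q ^ f n)) \<le> norm q ^ n"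
    using norm_pow_mono[OF assms(1) assms(2)] by (auto simp: norm_power)
  show "summable (\<lambda>n. norm q ^ n)" using assms(1) by (simp add: summable_geometric)
qed

lemma tri_nat_ge: "n \<le> n * (n + 1) div 2" for n :: nat
proof -
  have "2 * n \<le> n * (n + 1)" by (cases n) auto
  then show ?thesis by linarith
qed

lemma psi_has_sum:
  fixes q :: complex
  assumes "norm q < 1"
  shows "((\<lambda>n. q ^ (n * (n + 1) div 2)) has_sum ram_psi q) UNIV"
proof -
  have s: "summable (\<lambda>n. norm (q ^ (n * (n + 1) div 2)))"
    by (rule summable_geom_sub[OF assms tri_nat_ge])
  then have "summable (\<lambda>n. q ^ (n * (n + 1) div 2))" by (rule summable_norm_cancel)
  then have "(\<lambda>n. q ^ (n * (n + 1) div 2)) sums ram_psi q"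
    unfolding ram_psi_def by (rule summable_sums)
  then show ?thesis by (rule norm_summable_imp_has_sum[OF s])
qed

lemma tri_of_nat: "tri (int n) = int (n * (n + 1) div 2)"
proof -
  have "int (n * (n + 1) div 2) = int (n * (n + 1)) div int 2" by (rule zdiv_int)
  then show ?thesis unfolding tri_def by (simp add: algebra_simps)
qed

lemma psi_int_has_sum:
  fixes q :: complex
  assumes "norm q < 1"
  shows "((\<lambda>z. q ^ nat (tri z)) has_sum (2 * ram_psi q)) UNIV"
proof -
  have P: "((\<lambda>n. q ^ (n * (n + 1) div 2)) has_sum ram_psi q) UNIV" by (rule psi_has_sum[OF assms])
  have A: "((\<lambda>z. q ^ nat (tri z)) has_sum ram_psi q) (range int)"
  proof -
    have e: "(\<lambda>z. q ^ nat (tri z)) \<circ> int = (\<lambda>n. q ^ (n * (n + 1) div 2))"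
      by (rule ext) (simp only: o_def tri_of_nat nat_int)
    have c: "(((\<lambda>z. q ^ nat (tri z)) \<circ> int) has_sum ram_psi q) UNIV"
      unfolding e by (rule P)
    have i: "inj_on int UNIV" by (simp add: inj_on_def)
    show ?thesis by (rule iffD2[OF has_sum_reindex[OF i] c])
  qed
  have B: "((\<lambda>z. q ^ nat (tri z)) has_sum ram_psi q) (range (\<lambda>n. - int n - 1))"
  proof -
    have e: "(\<lambda>z. q ^ nat (tri z)) \<circ> (\<lambda>n. - int n - 1) = (\<lambda>n. q ^ (n * (n + 1) div 2))"
      by (rule ext) (simp only: o_def tri_neg tri_of_nat nat_int)
    have c: "(((\<lambda>z. q ^ nat (tri z)) \<circ> (\<lambda>n. - int n - 1)) has_sum ram_psi q) UNIV"
      unfolding e by (rule P)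
    have i: "inj_on (\<lambda>n. - int n - 1) UNIV" by (simp add: inj_on_def)
    show ?thesis by (rule iffD2[OF has_sum_reindex[OF i] c])
  qed
  have U: "range int \<union> range (\<lambda>n. - int n - 1) = (UNIV :: int set)"
  proof -
    have "z \<in> range int \<union> range (\<lambda>n. - int n - 1)" for z :: int
    proof (cases "z \<ge> 0")
      case True
    then have "z = int (nat z)" by simp
    then have "z \<in> range int" by (rule image_eqI) simp
    then show ?thesis by (rule UnI1)
    next
      case False
      then have "z = - int (nat (- z - 1)) - 1" by simp
      then have "z \<in> range (\<lambda>n. - int n - 1)" by (rule image_eqI) simp
      then show ?thesis by (rule UnI2)
    qed
    then show ?thesis by blast
  qed
  have D: "range int \<inter> range (\<lambda>n. - int n - 1) = {}"
  proof -
    have "\<And>a b. int a \<noteq> - int b - 1" by simp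
    then show ?thesis by blast
  qed
  have "((\<lambda>z. q ^ nat (tri z)) has_sum (ram_psi q + ram_psi q)) (range int \<union> range (\<lambda>n. - int n - 1))"
    by (rule has_sum_Un_disjoint[OF A B D])
  then have "((\<lambda>z. q ^ nat (tri z)) has_sum (ram_psi q + ram_psi q)) UNIV" by (simp only: U)
  then show ?thesis by (simp only: mult_2)
qed

lemma tri_le_sq: "tri s \<le> s * s"
proof -
  have "s \<le> s * s"
  proof (cases "s \<ge> 1")
    case True
    have "s * 1 \<le> s * s" by (rule mult_left_mono) (use True in auto)
    then show ?thesis by simp
  next
    case False
    then have "s \<le> 0" by simp
    moreover have "0 \<le> s * s" by simp
    ultimately show ?thesis by linarith
  qed
  then show ?thesis using tri2[of s] by (simp add: algebra_simps)
qed

lemma phi_int_has_sum: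
  fixes q :: complex
  assumes "norm q < 1"
  shows "((\<lambda>s. q ^ nat (s * s)) has_sum ram_phi q) UNIV"
proof -
  have "(\<lambda>z. q ^ nat (tri z)) summable_on UNIV"
    using psi_int_has_sum[OF assms] by (rule has_sum_imp_summable)
  then have "(\<lambda>z. norm (q ^ nat (tri z))) summable_on UNIV"
    by (simp add: summable_on_iff_abs_summable_on_complex)
  then have "(\<lambda>s. norm (q ^ nat (s * s))) summable_on UNIV"
  proof (rule Infinite_Sum.abs_summable_on_comparison_test)
    fix s :: int
    have "nat (tri s) \<le> nat (s * s)" using tri_le_sq[of s] by simp
    then show "norm (q ^ nat (s * s)) \<le> norm (q ^ nat (tri s))" by (rule norm_pow_mono[OF assms])
  qed
  then have "(\<lambda>s. q ^ nat (s * s)) summable_on UNIV" by (rule abs_summable_summable)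
  then show ?thesis unfolding ram_phi_def by (rule has_sum_infsum)
qed

lemma has_sum_times:
  fixes f g :: "_ \<Rightarrow> complex"
  assumes f: "(f has_sum a) A" and g: "(g has_sum b) B"
  shows "((\<lambda>(x, y). f x * g y) has_sum (a * b)) (A \<times> B)"
proof -
  have fa: "(\<lambda>x. norm (f x)) summable_on A" using has_sum_imp_summable[OF f] summable_on_iff_abs_summable_on_complex by blast
  have ga: "(\<lambda>x. norm (g x)) summable_on B" using has_sum_imp_summable[OF g] summable_on_iff_abs_summable_on_complex by blast
  have "(\<lambda>p. norm ((\<lambda>(x, y). f x * g y) p)) summable_on Sigma A (\<lambda>_. B)"
    unfolding Infinite_Sum.abs_summable_on_Sigma_iff
  proof (intro conjI ballI)
    fix x assume "x \<in> A"
    show "(\<lambda>y. norm (case (x, y) of (x, y) \<Rightarrow> f x * g y)) summable_on B"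
      using summable_on_cmult_right[OF ga, of "norm (f x)"] by (simp add: norm_mult)
  next
    have "(\<lambda>x. norm (f x) * infsum (\<lambda>y. norm (g y)) B) summable_on A"
      by (rule summable_on_cmult_left[OF fa])
    then have "(\<lambda>x. norm (norm (f x) * infsum (\<lambda>y. norm (g y)) B)) summable_on A"
      by (simp add: infsum_nonneg)
    then show "(\<lambda>x. norm (\<Sum>\<^sub>\<infinity>y\<in>B. norm (case (x, y) of (x, y) \<Rightarrow> f x * g y))) summable_on A"
      by (simp add: norm_mult infsum_cmult_right')
  qed
  then have S: "(\<lambda>(x, y). f x * g y) summable_on Sigma A (\<lambda>_. B)" by (rule abs_summable_summable)
  have "((\<lambda>(x, y). f x * g y) has_sum (a * b)) (Sigma A (\<lambda>_. B))"
  proof (rule has_sum_SigmaI[where g = "\<lambda>x. f x * b"])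
    show "((\<lambda>y. case (x, y) of (x, y) \<Rightarrow> f x * g y) has_sum f x * b) B" for x
      using has_sum_cmult_right[OF g, of "f x"] by simp
    show "((\<lambda>x. f x * b) has_sum a * b) A" by (rule has_sum_cmult_left[OF f])
    show "(\<lambda>(x, y). f x * g y) summable_on Sigma A (\<lambda>_. B)" by (rule S)
  qed
  then show ?thesis .
qed

lemma fiber_sums:
  fixes e :: "'a \<Rightarrow> nat" and q :: complex
  assumes h: "((\<lambda>p. q ^ e p) has_sum X) S" and fin: "\<And>n. finite {p\<in>S. e p = n}"
  shows "(\<lambda>n. of_nat (card {p\<in>S. e p = n}) * q ^ n) sums X"
proof -
  have im: "(\<lambda>p. (e p, p)) ` S = Sigma UNIV (\<lambda>n. {p\<in>S. e p = n})" by auto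
  have inj: "inj_on (\<lambda>p. (e p, p)) S" by (auto simp: inj_on_def)
  have "(((\<lambda>(n, p). q ^ n) \<circ> (\<lambda>p. (e p, p))) has_sum X) S" unfolding o_def prod.case by (rule h)
  then have "((\<lambda>(n, p). q ^ n) has_sum X) ((\<lambda>p. (e p, p)) ` S)"
    by (rule iffD2[OF has_sum_reindex[OF inj]])
  then have "((\<lambda>(n, p). q ^ n) has_sum X) (Sigma UNIV (\<lambda>n. {p\<in>S. e p = n}))"
    unfolding im .
  then have "((\<lambda>n. of_nat (card {p\<in>S. e p = n}) * q ^ n) has_sum X) UNIV"
  proof (rule has_sum_SigmaD)
    fix n :: nat
    show "((\<lambda>y. case (n, y) of (n, p) \<Rightarrow> q ^ n) has_sum of_nat (card {p\<in>S. e p = n}) * q ^ n) {p\<in>S. e p = n}"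
      unfolding prod.case by (rule has_sum_constant[OF fin[of n]])
  qed
  then show ?thesis by (rule has_sum_imp_sums)
qed

definition Et :: "nat \<Rightarrow> int \<times> int \<times> int \<Rightarrow> int" where
  "Et b p = (case p of (x, y, z) \<Rightarrow> 3 * tri x + 5 * tri y + 4 * int b * tri z)"
definition ee :: "nat \<Rightarrow> int \<times> int \<times> int \<Rightarrow> nat" where
  "ee b p = nat ((Et b p - 5) div 4)"
definition eS :: "nat \<Rightarrow> (int \<times> int \<times> int) set" where
  "eS b = {p. Et b p mod 4 = 1}"

definition hA :: "int \<times> int \<times> int \<Rightarrow> int \<times> int \<times> int" where
  "hA p = (case p of (z, s, w) \<Rightarrow> (w + 5 * s, 3 * w - s + 1, z))"
definition hB :: "int \<times> int \<times> int \<Rightarrow> int \<times> int \<times> int" where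
  "hB p = (case p of (z, s, w) \<Rightarrow> (w + 5 * s, s - 3 * w - 2, z))"
definition hC :: "int \<times> int \<times> int \<Rightarrow> int \<times> int \<times> int" where
  "hC p = (case p of (z, s, w) \<Rightarrow> (s + 5 * w + 2, 3 * s - w - 1, z))"
definition hD :: "int \<times> int \<times> int \<Rightarrow> int \<times> int \<times> int" where
  "hD p = (case p of (z, s, w) \<Rightarrow> (s + 5 * w + 2, w - 3 * s, z))"

definition fA :: "nat \<Rightarrow> int \<times> int \<times> int \<Rightarrow> nat" where
  "fA b p = (case p of (z, s, w) \<Rightarrow> b * nat (tri z) + 10 * nat (s * s) + 12 * nat (tri w))"
definition fC :: "nat \<Rightarrow> int \<times> int \<times> int \<Rightarrow> nat" where
  "fC b p = (case p of (z, s, w) \<Rightarrow> 1 + b * nat (tri z) + 6 * nat (s * s) + 20 * nat (tri w))"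

lemma idA: "3 * tri (w + 5 * s) + 5 * tri (3 * w - s + 1) = 4 * (10 * (s * s) + 12 * tri w) + 5"
proof -
  have "3 * (2 * tri (w + 5 * s)) + 5 * (2 * tri (3 * w - s + 1)) = 80 * (s * s) + 48 * (2 * tri w) + 10"
    unfolding tri2 by (simp add: algebra_simps)
  then show ?thesis by algebra
qed

lemma idC: "3 * tri (s + 5 * w + 2) + 5 * tri (3 * s - w - 1) = 4 * (6 * (s * s) + 20 * tri w + 1) + 5"
proof -
  have "3 * (2 * tri (s + 5 * w + 2)) + 5 * (2 * tri (3 * s - w - 1)) = 48 * (s * s) + 80 * (2 * tri w) + 18"
    unfolding tri2 by (simp add: algebra_simps)
  then show ?thesis by algebra
qed

lemma tri_B: "tri (s - 3 * w - 2) = tri (3 * w - s + 1)"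
  using tri_neg[of "3 * w - s + 1"] by (simp add: algebra_simps)
lemma tri_D: "tri (w - 3 * s) = tri (3 * s - w - 1)"
  using tri_neg[of "3 * s - w - 1"] by (simp add: algebra_simps)

lemma EtA: "Et b (hA p) = 4 * int (fA b p) + 5"
proof (cases p)
  case (fields z s w)
  have "int (fA b p) = int b * tri z + 10 * (s * s) + 12 * tri w"
    using tri_nonneg[of z] tri_nonneg[of w] by (simp add: fields fA_def)
  then show ?thesis using idA[of w s] by (simp add: fields hA_def Et_def algebra_simps)
qed

lemma EtB: "Et b (hB p) = 4 * int (fA b p) + 5"
proof (cases p)
  case (fields z s w)
  have "int (fA b p) = int b * tri z + 10 * (s * s) + 12 * tri w"
    using tri_nonneg[of z] tri_nonneg[of w] by (simp add: fields fA_def)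
  then show ?thesis using idA[of w s] tri_B[of s w] by (simp add: fields hB_def Et_def algebra_simps)
qed

lemma EtC: "Et b (hC p) = 4 * int (fC b p) + 5"
proof (cases p)
  case (fields z s w)
  have "int (fC b p) = 1 + int b * tri z + 6 * (s * s) + 20 * tri w"
    using tri_nonneg[of z] tri_nonneg[of w] by (simp add: fields fC_def)
  then show ?thesis using idC[of s w] by (simp add: fields hC_def Et_def algebra_simps)
qed

lemma EtD: "Et b (hD p) = 4 * int (fC b p) + 5"
proof (cases p)
  case (fields z s w)
  have "int (fC b p) = 1 + int b * tri z + 6 * (s * s) + 20 * tri w"
    using tri_nonneg[of z] tri_nonneg[of w] by (simp add: fields fC_def)
  then show ?thesis using idC[of s w] tri_D[of w s] by (simp add: fields hD_def Et_def algebra_simps)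
qed

lemma Et_ee: "Et b p = 4 * int m + 5 \<Longrightarrow> p \<in> eS b \<and> ee b p = m"
  unfolding eS_def ee_def by simp

lemma inj_hA: "inj hA" unfolding inj_def hA_def by auto
lemma inj_hB: "inj hB" unfolding inj_def hB_def by auto
lemma inj_hC: "inj hC" unfolding inj_def hC_def by auto
lemma inj_hD: "inj hD" unfolding inj_def hD_def by auto

lemma imA: "p \<in> range hA \<Longrightarrow> (case p of (x, y, z) \<Rightarrow> (x + 5 * y) mod 16 = 5)"
  by (auto simp: hA_def)
lemma imB: "p \<in> range hB \<Longrightarrow> (case p of (x, y, z) \<Rightarrow> (x - 5 * y) mod 16 = 10)"
  by (auto simp: hB_def)
lemma imC: "p \<in> range hC \<Longrightarrow> (case p of (x, y, z) \<Rightarrow> (x + 5 * y) mod 16 = 13)"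
  by (auto simp: hC_def; presburger)
lemma imD: "p \<in> range hD \<Longrightarrow> (case p of (x, y, z) \<Rightarrow> (x - 5 * y) mod 16 = 2)"
  by (auto simp: hD_def)

lemma disj_AB: "range hA \<inter> range hB = {}"
proof -
  have "p \<notin> range hA \<inter> range hB" for p
  proof
    assume "p \<in> range hA \<inter> range hB"
    then have "(case p of (x, y, z) \<Rightarrow> (x + 5 * y) mod 16 = 5)" "(case p of (x, y, z) \<Rightarrow> (x - 5 * y) mod 16 = 10)"
      using imA imB by auto
    then show False by (cases p) (simp; presburger)
  qed
  then show ?thesis by blast
qed
lemma disj_AD: "range hA \<inter> range hD = {}"
proof -
  have "p \<notin> range hA \<inter> range hD" for p
  proof
    assume "p \<in> range hA \<inter> range hD"
    then have "(case p of (x, y, z) \<Rightarrow> (x + 5 * y) mod 16 = 5)" "(case p of (x, y, z) \<Rightarrow> (x - 5 * y) mod 16 = 2)"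
      using imA imD by auto
    then show False by (cases p) (simp; presburger)
  qed
  then show ?thesis by blast
qed
lemma disj_CB: "range hC \<inter> range hB = {}"
proof -
  have "p \<notin> range hC \<inter> range hB" for p
  proof
    assume "p \<in> range hC \<inter> range hB"
    then have "(case p of (x, y, z) \<Rightarrow> (x + 5 * y) mod 16 = 13)" "(case p of (x, y, z) \<Rightarrow> (x - 5 * y) mod 16 = 10)"
      using imC imB by auto
    then show False by (cases p) (simp; presburger)
  qed
  then show ?thesis by blast
qed
lemma disj_CD: "range hC \<inter> range hD = {}"
proof -
  have "p \<notin> range hC \<inter> range hD" for p
  proof
    assume "p \<in> range hC \<inter> range hD"
    then have "(case p of (x, y, z) \<Rightarrow> (x + 5 * y) mod 16 = 13)" "(case p of (x, y, z) \<Rightarrow> (x - 5 * y) mod 16 = 2)"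
      using imC imD by auto
    then show False by (cases p) (simp; presburger)
  qed
  then show ?thesis by blast
qed
lemma disj_AC: "range hA \<inter> range hC = {}"
proof -
  have "p \<notin> range hA \<inter> range hC" for p
  proof
    assume "p \<in> range hA \<inter> range hC"
    then have "(case p of (x, y, z) \<Rightarrow> (x + 5 * y) mod 16 = 5)" "(case p of (x, y, z) \<Rightarrow> (x + 5 * y) mod 16 = 13)"
      using imA imC by auto
    then show False by (cases p) simp
  qed
  then show ?thesis by blast
qed
lemma disj_BD: "range hB \<inter> range hD = {}"
proof -
  have "p \<notin> range hB \<inter> range hD" for p
  proof
    assume "p \<in> range hB \<inter> range hD"
    then have "(case p of (x, y, z) \<Rightarrow> (x - 5 * y) mod 16 = 10)" "(case p of (x, y, z) \<Rightarrow> (x - 5 * y) mod 16 = 2)"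
      using imB imD by auto
    then show False by (cases p) simp
  qed
  then show ?thesis by blast
qed

lemma mod8_16: "(a::int) mod 8 = r \<Longrightarrow> a mod 16 = r \<or> a mod 16 = r + 8"
proof -
  assume h: "a mod 8 = r"
  define t where "t = a mod 16"
  have t: "0 \<le> t" "t < 16" unfolding t_def by simp_all
  have "t mod 8 = r" unfolding t_def using h by (simp add: mod_mod_cancel)
  then show ?thesis using t unfolding t_def[symmetric] by presburger
qed
lemma ge5: "(E::int) = 3*a + 5*c + 4*d \<Longrightarrow> a\<ge>0 \<Longrightarrow> c\<ge>0 \<Longrightarrow> d\<ge>0 \<Longrightarrow> E mod 4 = 1 \<Longrightarrow> E \<ge> 5"
  by presburger
lemma m4: "(E::int) mod 4 = 1 \<Longrightarrow> E \<ge> 5 \<Longrightarrow> nat ((E-5) div 4) = n \<Longrightarrow> E = 4 * int n + 5"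
proof -
  assume h: "E mod 4 = 1" "E \<ge> 5" "nat ((E-5) div 4) = n"
  define d where "d = (E - 5) div 4"
  have "d \<ge> 0" unfolding d_def using h(2) by simp
  then have "int n = d" using h(3) unfolding d_def[symmetric] by simp
  moreover have "E = 4 * d + 5" unfolding d_def using h(1) by presburger
  ultimately show ?thesis by simp
qed

lemma cover: "eS b = ((range hA \<union> range hB) \<union> range hC) \<union> range hD"
proof
  show "((range hA \<union> range hB) \<union> range hC) \<union> range hD \<subseteq> eS b"
  proof -
    have "Et b (hA p) mod 4 = 1" "Et b (hB p) mod 4 = 1" "Et b (hC p) mod 4 = 1" "Et b (hD p) mod 4 = 1" for p
      unfolding EtA EtB EtC EtD by presburger+
    then show ?thesis by (auto simp: eS_def)
  qed
  show "eS b \<subseteq> ((range hA \<union> range hB) \<union> range hC) \<union> range hD"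
  proof
    fix p assume p: "p \<in> eS b"
    obtain x y z where pe: "p = (x, y, z)" by (cases p) auto
    have "(3 * tri x + 5 * tri y + 4 * (int b * tri z)) mod 4 = 1"
      using p by (simp add: eS_def Et_def pe mult.assoc)
    then have "(3 * tri x + 5 * tri y) mod 4 = 1" by presburger
    then have k: "(x + 5 * y) mod 8 = 5 \<or> (x - 5 * y) mod 8 = 2" by (rule key2)
    have "(x + 5 * y) mod 16 = 5 \<or> (x + 5 * y) mod 16 = 13 \<or> (x - 5 * y) mod 16 = 10 \<or> (x - 5 * y) mod 16 = 2"
      using k mod8_16[of "x + 5 * y" 5] mod8_16[of "x - 5 * y" 2] by auto
    moreover
    { assume "(x + 5 * y) mod 16 = 5"
      then obtain w where w: "x + 5 * y = 16 * w + 5" by (metis mult_div_mod_eq add.commute mult.commute)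
      have "hA (z, 3 * w + 1 - y, w) = (x, y, z)" unfolding hA_def
        by (simp; insert w; (simp add: algebra_simps)?; linarith)
      then have "p \<in> range hA" unfolding pe by (metis rangeI) }
    moreover
    { assume "(x + 5 * y) mod 16 = 13"
      then obtain k where w: "x + 5 * y = 16 * k + 13" by (metis mult_div_mod_eq add.commute mult.commute)
      have "hC (z, k + 1, 3 * (k + 1) - y - 1) = (x, y, z)" unfolding hC_def
        by (simp; insert w; (simp add: algebra_simps)?; linarith)
      then have "p \<in> range hC" unfolding pe by (metis rangeI) }
    moreover
    { assume "(x - 5 * y) mod 16 = 10"
      then obtain w where w: "x - 5 * y = 16 * w + 10" by (metis mult_div_mod_eq add.commute mult.commute)
      have "hB (z, y + 3 * w + 2, w) = (x, y, z)" unfolding hB_def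
        by (simp; insert w; (simp add: algebra_simps)?; linarith)
      then have "p \<in> range hB" unfolding pe by (metis rangeI) }
    moreover
    { assume "(x - 5 * y) mod 16 = 2"
      then obtain k where w: "x - 5 * y = 16 * k + 2" by (metis mult_div_mod_eq add.commute mult.commute)
      have "hD (z, k, y + 3 * k) = (x, y, z)" unfolding hD_def
        by (simp; insert w; (simp add: algebra_simps)?; linarith)
      then have "p \<in> range hD" unfolding pe by (metis rangeI) }
    ultimately show "p \<in> ((range hA \<union> range hB) \<union> range hC) \<union> range hD" by blast
  qed
qed

lemma le_sq: "(s::int) \<le> s * s"
proof (cases "s \<ge> 1")
  case True
  have "s * 1 \<le> s * s" by (rule mult_left_mono) (use True in auto)
  then show ?thesis by simp
next
  case False
  then have "s \<le> 0" by simp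
  moreover have "0 \<le> s * s" by simp
  ultimately show ?thesis by linarith
qed

lemma tri_ge1: "x \<le> tri x"
proof -
  have "2 * tri x = x * x + x" using tri2[of x] by (simp add: algebra_simps)
  then show ?thesis using le_sq[of x] by linarith
qed

lemma tri_ge2: "- x - 1 \<le> tri x"
  using tri_ge1[of "- x - 1"] tri_neg[of x] by simp

lemma fiber_eq:
  assumes "b > 0"
  shows "{p \<in> eS b. ee b p = n} = {p. Et b p = 4 * int n + 5}"
proof
  show "{p. Et b p = 4 * int n + 5} \<subseteq> {p \<in> eS b. ee b p = n}" using Et_ee by blast
  show "{p \<in> eS b. ee b p = n} \<subseteq> {p. Et b p = 4 * int n + 5}"
  proof
    fix p assume p: "p \<in> {p \<in> eS b. ee b p = n}"
    obtain x y z where pe: "p = (x, y, z)" by (cases p) auto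
    have nn: "tri x \<ge> 0" "tri y \<ge> 0" "int b * tri z \<ge> 0" using tri_nonneg by auto
    have E: "Et b p = 3 * tri x + 5 * tri y + 4 * (int b * tri z)" by (simp add: Et_def pe)
    have m: "Et b p mod 4 = 1" and en: "nat ((Et b p - 5) div 4) = n" using p by (auto simp: eS_def ee_def)
    have "Et b p \<ge> 5" by (rule ge5[OF E nn m])
    then show "p \<in> {p. Et b p = 4 * int n + 5}" using m4[OF m _ en] by simp
  qed
qed

lemma fiber_finite:
  assumes "b > 0"
  shows "finite {p. Et b p = N}"
proof -
  let ?I = "{- N - 1..N}"
  have "{p. Et b p = N} \<subseteq> ?I \<times> ?I \<times> ?I"
  proof
    fix p assume "p \<in> {p. Et b p = N}"
    then obtain x y z where pe: "p = (x, y, z)" and E: "3 * tri x + 5 * tri y + 4 * (int b * tri z) = N"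
      by (cases p) (auto simp: Et_def mult.assoc)
    have nn: "tri x \<ge> 0" "tri y \<ge> 0" "tri z \<ge> 0" using tri_nonneg by auto
    have "tri z \<le> int b * tri z" using assms nn(3) by (simp add: mult_le_cancel_right1)
    then have "tri x \<le> N" "tri y \<le> N" "tri z \<le> N" using E nn by linarith+
    then show "p \<in> ?I \<times> ?I \<times> ?I"
      using tri_ge1[of x] tri_ge2[of x] tri_ge1[of y] tri_ge2[of y] tri_ge1[of z] tri_ge2[of z]
      by (simp add: pe)
  qed
  then show ?thesis by (rule finite_subset) simp
qed

lemma tcount_Et: "tcount 3 5 (4 * b) (4 * n + 5) = card {p. Et b p = 4 * int n + 5}"
proof -
  have "{(x, y, z). int (4 * n + 5) = int 3 * tri x + int 5 * tri y + int (4 * b) * tri z} = {p. Et b p = 4 * int n + 5}"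
    by (auto simp: Et_def)
  then show ?thesis unfolding tcount_tri by simp
qed

lemma norm_pow_lt1:
  fixes q :: complex
  assumes "norm q < 1" "k > 0"
  shows "norm (q ^ k) < 1"
proof -
  have "norm q ^ k \<le> norm q ^ 1" by (rule power_decreasing) (use assms in auto)
  then show ?thesis using assms(1) by (simp add: norm_power)
qed

lemma triple_has_sum:
  fixes q :: complex
  assumes q: "norm q < 1" and b: "b > 0" and k1: "k1 > 0" and k2: "k2 > 0"
  shows "((\<lambda>p. case p of (z, s, w) \<Rightarrow> q ^ (b * nat (tri z) + k1 * nat (s * s) + k2 * nat (tri w)))
     has_sum (2 * ram_psi (q ^ b) * (ram_phi (q ^ k1) * (2 * ram_psi (q ^ k2))))) UNIV"
proof -
  have h1: "((\<lambda>z. (q ^ b) ^ nat (tri z)) has_sum (2 * ram_psi (q ^ b))) UNIV"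
    by (rule psi_int_has_sum[OF norm_pow_lt1[OF q b]])
  have h2: "((\<lambda>s. (q ^ k1) ^ nat (s * s)) has_sum ram_phi (q ^ k1)) UNIV"
    by (rule phi_int_has_sum[OF norm_pow_lt1[OF q k1]])
  have h3: "((\<lambda>w. (q ^ k2) ^ nat (tri w)) has_sum (2 * ram_psi (q ^ k2))) UNIV"
    by (rule psi_int_has_sum[OF norm_pow_lt1[OF q k2]])
  note h23 = has_sum_times[OF h2 h3]
  note h = has_sum_times[OF h1 h23]
  have U: "(UNIV :: int set) \<times> ((UNIV :: int set) \<times> (UNIV :: int set)) = UNIV" by simp
  have e: "(\<lambda>(x, y). (q ^ b) ^ nat (tri x) * (case y of (x, y) \<Rightarrow> (q ^ k1) ^ nat (x * x) * (q ^ k2) ^ nat (tri y)))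
      = (\<lambda>p. case p of (z, s, w) \<Rightarrow> q ^ (b * nat (tri z) + k1 * nat (s * s) + k2 * nat (tri w)))"
    by (rule ext) (simp add: power_mult power_add split: prod.splits)
  show ?thesis using h unfolding U e .
qed

lemma part2:
  fixes q :: complex
  assumes b: "b > 0" and q: "norm q < 1"
  shows "(\<Sum>n. of_nat (tcount 3 5 (4 * b) (4 * n + 5)) * q ^ n) =
         8 * ram_psi (q ^ b) * (ram_phi (q ^ 10) * ram_psi (q ^ 12) + q * ram_phi (q ^ 6) * ram_psi (q ^ 20))"
proof -
  define g where "g = (\<lambda>p. q ^ ee b p)"
  define XA where "XA = 2 * ram_psi (q ^ b) * (ram_phi (q ^ 10) * (2 * ram_psi (q ^ 12)))"
  define XC where "XC = q * (2 * ram_psi (q ^ b) * (ram_phi (q ^ 6) * (2 * ram_psi (q ^ 20))))"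
  have TA: "((\<lambda>p. q ^ fA b p) has_sum XA) UNIV"
  proof -
    have e: "(\<lambda>p. case p of (z, s, w) \<Rightarrow> q ^ (b * nat (tri z) + 10 * nat (s * s) + 12 * nat (tri w))) = (\<lambda>p. q ^ fA b p)"
      by (rule ext) (simp add: fA_def split: prod.splits)
    show ?thesis using triple_has_sum[OF q b, of 10 12] unfolding e XA_def by simp
  qed
  have TC: "((\<lambda>p. q ^ fC b p) has_sum XC) UNIV"
  proof -
    have e: "(\<lambda>p. q * (case p of (z, s, w) \<Rightarrow> q ^ (b * nat (tri z) + 6 * nat (s * s) + 20 * nat (tri w)))) = (\<lambda>p. q ^ fC b p)"
      by (rule ext) (simp add: fC_def split: prod.splits)
    show ?thesis using has_sum_cmult_right[OF triple_has_sum[OF q b, of 6 20], of q] unfolding e XC_def by simp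
  qed
  have eA: "g \<circ> hA = (\<lambda>p. q ^ fA b p)" by (rule ext) (simp add: g_def Et_ee[OF EtA])
  have eB: "g \<circ> hB = (\<lambda>p. q ^ fA b p)" by (rule ext) (simp add: g_def Et_ee[OF EtB])
  have eC: "g \<circ> hC = (\<lambda>p. q ^ fC b p)" by (rule ext) (simp add: g_def Et_ee[OF EtC])
  have eD: "g \<circ> hD = (\<lambda>p. q ^ fC b p)" by (rule ext) (simp add: g_def Et_ee[OF EtD])
  have GA: "(g has_sum XA) (range hA)" by (rule iffD2[OF has_sum_reindex[OF inj_hA]]) (unfold eA, rule TA)
  have GB: "(g has_sum XA) (range hB)" by (rule iffD2[OF has_sum_reindex[OF inj_hB]]) (unfold eB, rule TA)
  have GC: "(g has_sum XC) (range hC)" by (rule iffD2[OF has_sum_reindex[OF inj_hC]]) (unfold eC, rule TC)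
  have GD: "(g has_sum XC) (range hD)" by (rule iffD2[OF has_sum_reindex[OF inj_hD]]) (unfold eD, rule TC)
  have d1: "range hA \<inter> range hB = {}" by (rule disj_AB)
  have d2: "(range hA \<union> range hB) \<inter> range hC = {}" using disj_AC disj_CB by blast
  have d3: "((range hA \<union> range hB) \<union> range hC) \<inter> range hD = {}" using disj_AD disj_BD disj_CD by blast
  have "(g has_sum (((XA + XA) + XC) + XC)) (((range hA \<union> range hB) \<union> range hC) \<union> range hD)"
    by (rule has_sum_Un_disjoint[OF has_sum_Un_disjoint[OF has_sum_Un_disjoint[OF GA GB d1] GC d2] GD d3])
  then have G: "(g has_sum (((XA + XA) + XC) + XC)) (eS b)" unfolding cover[of b, symmetric] .
  have fin: "finite {p \<in> eS b. ee b p = n}" for n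
    unfolding fiber_eq[OF b] by (rule fiber_finite[OF b])
  have "(\<lambda>n. of_nat (card {p \<in> eS b. ee b p = n}) * q ^ n) sums (((XA + XA) + XC) + XC)"
    by (rule fiber_sums[OF G[unfolded g_def] fin])
  moreover have "card {p \<in> eS b. ee b p = n} = tcount 3 5 (4 * b) (4 * n + 5)" for n
    unfolding fiber_eq[OF b] tcount_Et ..
  ultimately have "(\<lambda>n. of_nat (tcount 3 5 (4 * b) (4 * n + 5)) * q ^ n) sums (((XA + XA) + XC) + XC)"
    by simp
  then have "(\<Sum>n. of_nat (tcount 3 5 (4 * b) (4 * n + 5)) * q ^ n) = ((XA + XA) + XC) + XC"
    by (rule sums_unique[symmetric])
  also have "\<dots> = 8 * ram_psi (q ^ b) * (ram_phi (q ^ 10) * ram_psi (q ^ 12) + q * ram_phi (q ^ 6) * ram_psi (q ^ 20))"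
    unfolding XA_def XC_def by (simp add: algebra_simps)
  finally show ?thesis .
qed

theorem lemma6p3:
  fixes b :: nat
  assumes "b > 0"
  shows "(\<forall>n::nat. n > 0 \<longrightarrow> tcount 3 5 (4 * b) (4 * n + 3) = tcount 3 5 b n)
    \<and> (\<forall>q::complex. norm q < 1 \<longrightarrow>
         (\<Sum>n. of_nat (tcount 3 5 (4 * b) (4 * n + 5)) * q ^ n) =
         8 * ram_psi (q ^ b) * (ram_phi (q ^ 10) * ram_psi (q ^ 12) + q * ram_phi (q ^ 6) * ram_psi (q ^ 20)))"
  using part1 part2[OF assms] by blast

end
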